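(* The generating function $$G_{(132,321)}(x,p,q,y,z)=\sum_{n\ge 0}\ \sum_{\pi\in S_n(132,321)} x^n p^{\operatorname{asc}(\pi)} q^{\operatorname{des}(\pi)} y^{\operatorname{MNA}(\pi)} z^{\operatorname{MND}(\pi)}$$ is equal to $\dfrac{A}{(1-p^2x^2y)^3}$, where $$A=1 + x + p x^2 y - 3 p^2 x^2 y - 2 p^2 x^3 y - 2 p^3 x^4 y^2 + 3 p^4 x^4 y^2 + p^4 x^5 y^2 + p^5 x^6 y^3 - p^6 x^6 y^3 + q x^2 z + 3 p q x^3 y z + p^2 q x^4 y z + 2 p^2 q x^4 y^2 z + p^3 q x^5 y^2 z.$$
   Context: For $n\ge 0$, $S_n$ denotes the set of permutations $\pi=\pi_1\pi_2\cdots\pi_n$ of $[n]=\{1,\dots,n\}$ ($S_0$ consists of the empty permutation, for which all statistics below are $0$). A permutation $\pi\in S_n$ avoids a pattern $\tau\in S_k$ if there are no indices $i_1<\dots<i_k$ such that $\pi_{i_a}<\pi_{i_b}$ if and only if $\tau_a<\tau_b$; $S_n(\tau,\rho)$ is the set of permutations in $S_n$ avoiding both $\tau$ and $\rho$. $\operatorname{asc}(\pi)$ (resp. $\operatorname{des}(\pi)$) is the number of $i\in[n-1]$ with $\pi_i<\pi_{i+1}$ (resp. $\pi_i>\pi_{i+1}$). $\operatorname{MNA}(\pi)$ is the maximum size of a set $I\subseteq[n-1]$ such that $\pi_i<\pi_{i+1}$ for all $i\in I$ and $|i-j|\ge 2$ for distinct $i,j\in I$; $\operatorname{MND}(\pi)$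 is defined analogously with $\pi_i>\pi_{i+1}$. *)

theory Defs
  imports "HOL-Computational_Algebra.Formal_Power_Series"
begin

text \<open>Permutations of [n] as lists (one-line notation, 0-indexed positions).\<close>
definition perms :: "nat \<Rightarrow> nat list set" where
  "perms n = {\<pi>. distinct \<pi> \<and> set \<pi> = {1..n}}"

definition contains :: "nat list \<Rightarrow> nat list \<Rightarrow> bool" where
  "contains \<pi> \<tau> \<longleftrightarrow> (\<exists>idx :: nat \<Rightarrow> nat.
      strict_mono_on {..<length \<tau>} idx \<and> (\<forall>a<length \<tau>. idx a < length \<pi>) \<and>
      (\<forall>a<length \<tau>. \<forall>b<length \<tau>. (\<pi> ! idx a < \<pi> ! idx b \<longleftrightarrow> \<tau> ! a < \<tau> ! b)))"

definition avoids :: "nat list \<Rightarrow> nat list \<Rightarrow> bool" where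
  "avoids \<pi> \<tau> \<longleftrightarrow> \<not> contains \<pi> \<tau>"

definition perms_avoiding2 :: "nat \<Rightarrow> nat list \<Rightarrow> nat list \<Rightarrow> nat list set" where
  "perms_avoiding2 n \<tau> \<rho> = {\<pi> \<in> perms n. avoids \<pi> \<tau> \<and> avoids \<pi> \<rho>}"

definition asc_set :: "nat list \<Rightarrow> nat set" where
  "asc_set \<pi> = {i. i + 1 < length \<pi> \<and> \<pi> ! i < \<pi> ! (i + 1)}"

definition des_set :: "nat list \<Rightarrow> nat set" where
  "des_set \<pi> = {i. i + 1 < length \<pi> \<and> \<pi> ! i > \<pi> ! (i + 1)}"

definition asc :: "nat list \<Rightarrow> nat" where "asc \<pi> = card (asc_set \<pi>)"
definition des :: "nat list \<Rightarrow> nat" where "des \<pi> = card (des_set \<pi>)"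

definition separated :: "nat set \<Rightarrow> bool" where
  "separated I \<longleftrightarrow> (\<forall>i\<in>I. \<forall>j\<in>I. i \<noteq> j \<longrightarrow> i + 2 \<le> j \<or> j + 2 \<le> i)"

definition MNA :: "nat list \<Rightarrow> nat" where
  "MNA \<pi> = Max {card I | I. I \<subseteq> asc_set \<pi> \<and> separated I}"

definition MND :: "nat list \<Rightarrow> nat" where
  "MND \<pi> = Max {card I | I. I \<subseteq> des_set \<pi> \<and> separated I}"

text \<open>Generating function, as a formal power series in x whose coefficients are
  evaluated at arbitrary real values of p, q, y, z.\<close>
definition G :: "nat list \<Rightarrow> nat list \<Rightarrow> real \<Rightarrow> real \<Rightarrow> real \<Rightarrow> real \<Rightarrow> real fps" where
  "G \<tau> \<rho> p q y z = Abs_fps (\<lambda>n. \<Sum>\<pi>\<in>perms_avoiding2 n \<tau> \<rho>.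
      p ^ asc \<pi> * q ^ des \<pi> * y ^ MNA \<pi> * z ^ MND \<pi>)"

end

theory Submission
  imports Defs
begin

lemma less3: "(a::nat) < 3 \<longleftrightarrow> a = 0 \<or> a = 1 \<or> a = 2" by auto

lemma contains_132: "contains \<pi> [1,3,2] \<longleftrightarrow>
  (\<exists>i j k. i<j \<and> j<k \<and> k<length \<pi> \<and> \<pi>!i < \<pi>!k \<and> \<pi>!k < \<pi>!j)"
proof
  assume "contains \<pi> [1,3,2]"
  then obtain idx where m: "strict_mono_on {..<length [1,3,2::nat]} idx" and l: "\<forall>a<length [1,3,2::nat]. idx a < length \<pi>"
    and c: "\<forall>a<length [1,3,2::nat]. \<forall>b<length [1,3,2::nat]. (\<pi> ! idx a < \<pi> ! idx b \<longleftrightarrow> [1,3,2::nat] ! a < [1,3,2] ! b)"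
    unfolding contains_def by blast
  have "idx 0 < idx 1" "idx 1 < idx 2" using m by (auto simp: strict_mono_on_def)
  moreover have "\<pi> ! idx 0 < \<pi> ! idx 2" "\<pi> ! idx 2 < \<pi> ! idx 1"
    using c[rule_format, of 0 2] c[rule_format, of 2 1] by auto
  moreover have "idx 2 < length \<pi>" using l by auto
  ultimately show "\<exists>i j k. i<j \<and> j<k \<and> k<length \<pi> \<and> \<pi>!i < \<pi>!k \<and> \<pi>!k < \<pi>!j" by blast
next
  assume "\<exists>i j k. i<j \<and> j<k \<and> k<length \<pi> \<and> \<pi>!i < \<pi>!k \<and> \<pi>!k < \<pi>!j"
  then obtain i j k where h: "i<j" "j<k" "k<length \<pi>" "\<pi>!i < \<pi>!k" "\<pi>!k < \<pi>!j" by blast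
  define idx where "idx = (\<lambda>a::nat. if a=0 then i else if a=1 then j else k)"
  have "strict_mono_on {..<3} idx" using h unfolding strict_mono_on_def idx_def by (auto simp: less3)
  moreover have "\<forall>a<3. idx a < length \<pi>" using h unfolding idx_def by (auto simp: less3)
  moreover have "\<forall>a<3. \<forall>b<3. (\<pi> ! idx a < \<pi> ! idx b \<longleftrightarrow> [1,3,2::nat] ! a < [1,3,2] ! b)"
    using h unfolding idx_def by (auto simp: less3)
  moreover have len3: "length [1,3,2::nat] = 3" by simp
  ultimately show "contains \<pi> [1,3,2]" unfolding contains_def len3 by blast
qed

lemma contains_321: "contains \<pi> [3,2,1] \<longleftrightarrow>
  (\<exists>i j k. i<j \<and> j<k \<and> k<length \<pi> \<and> \<pi>!k < \<pi>!j \<and> \<pi>!j < \<pi>!i)"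
proof
  assume "contains \<pi> [3,2,1]"
  then obtain idx where m: "strict_mono_on {..<length [3,2,1::nat]} idx" and l: "\<forall>a<length [3,2,1::nat]. idx a < length \<pi>"
    and c: "\<forall>a<length [3,2,1::nat]. \<forall>b<length [3,2,1::nat]. (\<pi> ! idx a < \<pi> ! idx b \<longleftrightarrow> [3,2,1::nat] ! a < [3,2,1] ! b)"
    unfolding contains_def by blast
  have "idx 0 < idx 1" "idx 1 < idx 2" using m by (auto simp: strict_mono_on_def)
  moreover have "\<pi> ! idx 2 < \<pi> ! idx 1" "\<pi> ! idx 1 < \<pi> ! idx 0"
    using c[rule_format, of 2 1] c[rule_format, of 1 0] by auto
  moreover have "idx 2 < length \<pi>" using l by auto
  ultimately show "\<exists>i j k. i<j \<and> j<k \<and> k<length \<pi> \<and> \<pi>!k < \<pi>!j \<and> \<pi>!j < \<pi>!i" by blast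
next
  assume "\<exists>i j k. i<j \<and> j<k \<and> k<length \<pi> \<and> \<pi>!k < \<pi>!j \<and> \<pi>!j < \<pi>!i"
  then obtain i j k where h: "i<j" "j<k" "k<length \<pi>" "\<pi>!k < \<pi>!j" "\<pi>!j < \<pi>!i" by blast
  define idx where "idx = (\<lambda>a::nat. if a=0 then i else if a=1 then j else k)"
  have "strict_mono_on {..<3} idx" using h unfolding strict_mono_on_def idx_def by (auto simp: less3)
  moreover have "\<forall>a<3. idx a < length \<pi>" using h unfolding idx_def by (auto simp: less3)
  moreover have "\<forall>a<3. \<forall>b<3. (\<pi> ! idx a < \<pi> ! idx b \<longleftrightarrow> [3,2,1::nat] ! a < [3,2,1] ! b)"
    using h unfolding idx_def by (auto simp: less3)
  moreover have len3: "length [3,2,1::nat] = 3" by simp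
  ultimately show "contains \<pi> [3,2,1]" unfolding contains_def len3 by blast
qed

definition Lp :: "nat \<Rightarrow> nat \<Rightarrow> nat \<Rightarrow> nat list" where
  "Lp a b n = [a+1..<a+b+1] @ [1..<a+1] @ [a+b+1..<n+1]"

definition fL :: "nat \<Rightarrow> nat \<Rightarrow> nat \<Rightarrow> nat" where
  "fL a b i = (if i<b then a+1+i else if i<a+b then i-b+1 else i+1)"

lemma Lp_len: "a+b \<le> n \<Longrightarrow> length (Lp a b n) = n"
  unfolding Lp_def length_append length_upt by arith
lemma Lp_nth: assumes "a+b \<le> n" "i < n" shows "Lp a b n ! i = fL a b i"
proof -
  have e: "Lp a b n = [a+1..<a+b+1] @ ([1..<a+1] @ [a+b+1..<n+1])" unfolding Lp_def by simp
  have l1: "length [a+1..<a+b+1] = b" by simp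
  have l2: "length [1..<a+1] = a" by simp
  show ?thesis
  proof (cases "i < b")
    case True thus ?thesis unfolding e fL_def nth_append l1 by (simp del: upt_Suc)
  next
    case f1: False
    show ?thesis
    proof (cases "i < a+b")
      case True
      have "i - b < a" using True f1 by arith
      thus ?thesis using True f1 unfolding e fL_def nth_append l1 l2 by (simp del: upt_Suc)
    next
      case False
      have "i - b - a < n + 1 - (a+b+1)" "\<not> i - b < a" using assms False f1 by arith+
      thus ?thesis using f1 False unfolding e fL_def nth_append l1 l2 by (simp del: upt_Suc)
    qed
  qed
qed

lemma Lp_perm: "a+b \<le> n \<Longrightarrow> Lp a b n \<in> perms n"
  unfolding Lp_def perms_def by (auto simp: set_upt)

lemma fL_132: "i<j \<Longrightarrow> j<k \<Longrightarrow> \<not> (fL a b i < fL a b k \<and> fL a b k < fL a b j)"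
  unfolding fL_def by (cases "i<b"; cases "j<b"; cases "k<b"; cases "i<a+b"; cases "j<a+b"; cases "k<a+b"; simp; arith)
lemma fL_321: "i<j \<Longrightarrow> j<k \<Longrightarrow> \<not> (fL a b k < fL a b j \<and> fL a b j < fL a b i)"
  unfolding fL_def by (cases "i<b"; cases "j<b"; cases "k<b"; cases "i<a+b"; cases "j<a+b"; cases "k<a+b"; simp)

lemma Lp_avoids: assumes "a+b \<le> n"
  shows "avoids (Lp a b n) [1,3,2]" "avoids (Lp a b n) [3,2,1]"
proof -
  have h: "i < n \<Longrightarrow> Lp a b n ! i = fL a b i" for i using Lp_nth assms by blast
  show "avoids (Lp a b n) [1,3,2]"
    unfolding avoids_def contains_132 Lp_len[OF assms]
  proof clarify
    fix i j k assume "i<j" "j<k" "k<n" "Lp a b n ! i < Lp a b n ! k" "Lp a b n ! k < Lp a b n ! j"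
    thus False using h[of i] h[of j] h[of k] fL_132[of i j k a b] by simp
  qed
  show "avoids (Lp a b n) [3,2,1]"
    unfolding avoids_def contains_321 Lp_len[OF assms]
  proof clarify
    fix i j k assume "i<j" "j<k" "k<n" "Lp a b n ! k < Lp a b n ! j" "Lp a b n ! j < Lp a b n ! i"
    thus False using h[of i] h[of j] h[of k] fL_321[of i j k a b] by simp
  qed
qed

lemma avoider_form:
  assumes P: "\<pi> \<in> perms n" and A1: "avoids \<pi> [1,3,2]" and A2: "avoids \<pi> [3,2,1]"
  shows "\<pi> = Lp 0 0 n \<or> (\<exists>a b. 1 \<le> a \<and> 1 \<le> b \<and> a + b \<le> n \<and> \<pi> = Lp a b n)"
proof -
  have dist: "distinct \<pi>" and st: "set \<pi> = {1..n}" using P by (auto simp: perms_def)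
  have len: "length \<pi> = n" using distinct_card[OF dist] st by simp
  have neq: "\<pi>!i \<noteq> \<pi>!j" if "i < n" "j < n" "i \<noteq> j" for i j
    using dist that len by (simp add: nth_eq_iff_index_eq)
  have no132: "\<not> (i<j \<and> j<k \<and> k<n \<and> \<pi>!i < \<pi>!k \<and> \<pi>!k < \<pi>!j)" for i j k
    using A1 len unfolding avoids_def contains_132 by blast
  have no321: "\<not> (i<j \<and> j<k \<and> k<n \<and> \<pi>!k < \<pi>!j \<and> \<pi>!j < \<pi>!i)" for i j k
    using A2 len unfolding avoids_def contains_321 by blast
  have one: False if "i < j" "j+1 < n" "\<pi>!i > \<pi>!(i+1)" "\<pi>!j > \<pi>!(j+1)" for i j
  proof (cases "\<pi>!i > \<pi>!j")
    case True thus False using no321[of i j "j+1"] that by auto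
  next
    case False
    hence lt: "\<pi>!i < \<pi>!j" using neq[of i j] that by force
    hence "j \<noteq> i+1" using that by auto
    hence ij: "i+1 < j" using that by auto
    show False
    proof (cases "\<pi>!i < \<pi>!(j+1)")
      case True thus False using no132[of i j "j+1"] that lt by auto
    next
      case False
      hence g: "\<pi>!(j+1) < \<pi>!i" using neq[of i "j+1"] that by force
      show False
      proof (cases "\<pi>!(i+1) > \<pi>!(j+1)")
        case True thus False using no321[of i "i+1" "j+1"] that ij by auto
      next
        case False
        hence "\<pi>!(i+1) < \<pi>!(j+1)" using neq[of "i+1" "j+1"] that ij by force
        thus False using no132[of "i+1" j "j+1"] that ij by auto
      qed
    qed
  qed
  have asc_or: "\<pi>!i < \<pi>!(i+1) \<or> \<pi>!i > \<pi>!(i+1)" if "i+1 < n" for i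
    using neq[of i "i+1"] that by force
  show ?thesis
  proof (cases "\<exists>d. d+1 < n \<and> \<pi>!d > \<pi>!(d+1)")
    case False
    hence "\<forall>i. Suc i < length \<pi> \<longrightarrow> \<pi>!i \<le> \<pi>!(Suc i)" using asc_or len
      by (metis Suc_eq_plus1 less_imp_le_nat)
    hence "sorted \<pi>" by (simp add: sorted_iff_nth_Suc)
    hence "\<pi> = [1..<n+1]" using dist st sorted_upt[of 1 "n+1"] distinct_upt[of 1 "n+1"]
      by (intro sorted_distinct_set_unique) (simp_all del: upt_Suc add: atLeastLessThanSuc_atLeastAtMost)
    thus ?thesis by (simp add: Lp_def)
  next
    case True
    then obtain d where d: "d+1 < n" "\<pi>!d > \<pi>!(d+1)" by blast
    have ascs: "\<pi>!i < \<pi>!(i+1)" if "i+1 < n" "i \<noteq> d" for i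
    proof -
      have "\<not> \<pi>!i > \<pi>!(i+1)"
      proof
        assume h: "\<pi>!i > \<pi>!(i+1)"
        show False
        proof (cases "i < d")
          case True thus False using one[of i d] h d by auto
        next
          case False thus False using one[of d i] h d that by auto
        qed
      qed
      thus ?thesis using asc_or[OF that(1)] by auto
    qed
    define Pl where "Pl = take (d+1) \<pi>"
    define Ql where "Ql = drop (d+1) \<pi>"
    have PQ: "\<pi> = Pl @ Ql" unfolding Pl_def Ql_def by simp
    have lP: "length Pl = d+1" unfolding Pl_def using len d by simp
    have lQ: "length Ql = n - (d+1)" unfolding Ql_def using len d by simp
    have nthP: "Pl ! i = \<pi> ! i" if "i < d+1" for i unfolding Pl_def using that by simp
    have nthQ: "Ql ! i = \<pi> ! (d+1+i)" if "d+1+i < n" for i unfolding Ql_def using that len by simp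
    have sP: "sorted_wrt (<) Pl"
      unfolding sorted_wrt_iff_nth_Suc_transp[OF transp_on_less] lP
      using ascs nthP d by auto
    have sQ: "sorted_wrt (<) Ql"
      unfolding sorted_wrt_iff_nth_Suc_transp[OF transp_on_less] lQ
      using ascs nthQ d by auto
    have dP: "distinct Pl" and dQ: "distinct Ql" and disj: "set Pl \<inter> set Ql = {}"
      using dist PQ by (metis distinct_append)+
    have un: "set Pl \<union> set Ql = {1..n}" using st PQ by (metis set_append)
    define m where "m = \<pi>!0"
    define M where "M = \<pi>!d"
    have PinmM: "set Pl \<subseteq> {m..M}"
    proof
      fix x assume "x \<in> set Pl"
      then obtain i where i: "i < d+1" "x = Pl!i" by (metis in_set_conv_nth lP)
      have "\<pi>!0 \<le> \<pi>!i"
        using sorted_wrt_nth_less[OF sP, of 0 i] nthP i lP by (cases "i=0") auto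
      moreover have "\<pi>!i \<le> \<pi>!d"
        using sorted_wrt_nth_less[OF sP, of i d] nthP i lP by (cases "i=d") auto
      ultimately show "x \<in> {m..M}" using i nthP m_def M_def by auto
    qed
    have mP: "m \<in> set Pl" "M \<in> set Pl" unfolding m_def M_def
      using nthP[of 0] nthP[of d] lP by (metis add_gr_0 less_add_one nth_mem zero_less_one)+
    have mMinP: "{m..M} \<subseteq> set Pl"
    proof
      fix v assume v: "v \<in> {m..M}"
      show "v \<in> set Pl"
      proof (rule ccontr)
        assume nv: "v \<notin> set Pl"
        have "m \<in> set Pl" "M \<in> set Pl" unfolding m_def M_def
          using nthP[of 0] nthP[of d] lP by (metis add_gr_0 less_add_one nth_mem zero_less_one)+
        hence vne: "v \<noteq> m" "v \<noteq> M" using nv by auto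
        have "m \<in> {1..n}" "M \<in> {1..n}" using \<open>m \<in> set Pl\<close> \<open>M \<in> set Pl\<close> un by auto
        hence "v \<in> {1..n}" using v by auto
        hence "v \<in> set Ql" using un nv by auto
        then obtain k where k: "k < n - (d+1)" "v = Ql!k" by (metis in_set_conv_nth lQ)
        have "d \<noteq> 0"
        proof
          assume "d = 0" hence "m = M" unfolding m_def M_def by simp
          thus False using v vne by auto
        qed
        thus False using no132[of 0 d "d+1+k"] k nthQ v vne m_def M_def by auto
      qed
    qed
    have setP: "set Pl = {m..M}" using PinmM mMinP by auto
    have mM1: "m \<in> {1..n}" "M \<in> {1..n}" using mP un by auto
    have mM: "m \<le> M" "1 \<le> m" "M \<le> n" using mP(2) mM1 unfolding setP by auto
    have Pl_eq: "Pl = [m..<M+1]"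
      using sP[unfolded strict_sorted_iff] setP sorted_upt[of m "M+1"] distinct_upt[of m "M+1"]
      by (intro sorted_distinct_set_unique) (simp_all del: upt_Suc add: atLeastLessThanSuc_atLeastAtMost)
    have setQ: "set Ql = {1..n} - {m..M}" using un disj setP by auto
    have Ql_eq: "Ql = [1..<m] @ [M+1..<n+1]"
    proof (rule sorted_distinct_set_unique)
      show "sorted Ql" "distinct Ql" using sQ unfolding strict_sorted_iff by simp_all
      show "sorted ([1..<m] @ [M+1..<n+1])" using mM by (simp del: upt_Suc add: sorted_append)
      show "distinct ([1..<m] @ [M+1..<n+1])" using mM by (simp del: upt_Suc)
      have "{1..n} - {m..M} = set ([1..<m] @ [M+1..<n+1])" using mM by (auto simp del: upt_Suc)
      thus "set Ql = set ([1..<m] @ [M+1..<n+1])" using setQ by simp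
    qed
    have "\<pi>!(d+1) \<in> set Ql" using nthQ[of 0] lQ d by (metis add_0_right nth_mem zero_less_diff)
    moreover have "\<pi>!(d+1) < M" using d M_def by auto
    ultimately have "\<pi>!(d+1) < m" unfolding setQ by auto
    moreover have "\<pi>!(d+1) \<ge> 1" using \<open>\<pi>!(d+1) \<in> set Ql\<close> setQ by auto
    ultimately have m2: "2 \<le> m" by auto
    have e1: "m - 1 + 1 = m" "m - 1 + (M - m + 1) + 1 = M + 1" using mM m2 by auto
    have "\<pi> = Lp (m-1) (M-m+1) n" unfolding PQ Pl_eq Ql_eq Lp_def e1 by simp
    moreover have "M - m + 1 \<ge> 1" "m - 1 \<ge> 1" "m - 1 + (M - m + 1) \<le> n" using mM m2 by auto
    ultimately show ?thesis by blast
  qed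
qed

lemma sep_bound:
  assumes "separated I" "I \<subseteq> {lo..<hi}"
  shows "card I \<le> (hi - lo + 1) div 2"
proof -
  have inj: "inj_on (\<lambda>i. (i - lo) div 2) I"
  proof (rule inj_onI)
    fix i j assume ij: "i \<in> I" "j \<in> I" "(i - lo) div 2 = (j - lo) div 2"
    show "i = j"
    proof (rule ccontr)
      assume "i \<noteq> j"
      hence "i + 2 \<le> j \<or> j + 2 \<le> i" using assms(1) ij unfolding separated_def by blast
      moreover have "lo \<le> i" "lo \<le> j" using assms(2) ij by auto
      ultimately show False using ij(3) by arith
    qed
  qed
  have "(\<lambda>i. (i - lo) div 2) ` I \<subseteq> {..<(hi - lo + 1) div 2}"
  proof
    fix x assume "x \<in> (\<lambda>i. (i - lo) div 2) ` I"
    then obtain i where "i \<in> I" "x = (i - lo) div 2" by blast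
    moreover hence "lo \<le> i" "i < hi" using assms(2) by auto
    ultimately show "x \<in> {..<(hi - lo + 1) div 2}" by simp
  qed
  hence "card ((\<lambda>i. (i - lo) div 2) ` I) \<le> (hi - lo + 1) div 2"
    by (metis card_lessThan card_mono finite_lessThan)
  thus ?thesis using card_image[OF inj] by simp
qed

lemma msep_two:
  assumes "lo1 \<le> hi1" "hi1 < lo2" "lo2 \<le> hi2"
  shows "Max {card I | I. I \<subseteq> {lo1..<hi1} \<union> {lo2..<hi2} \<and> separated I}
         = (hi1 - lo1 + 1) div 2 + (hi2 - lo2 + 1) div 2"
    (is "Max ?S = ?K")
proof (rule Max_eqI)
  have "?S \<subseteq> {..?K}"
  proof
    fix c assume "c \<in> ?S"
    then obtain I where I: "c = card I" "I \<subseteq> {lo1..<hi1} \<union> {lo2..<hi2}" "separated I" by blast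
    have sI: "separated (I \<inter> {lo1..<hi1})" "separated (I \<inter> {lo2..<hi2})"
      using I(3) unfolding separated_def by blast+
    have "card I \<le> card (I \<inter> {lo1..<hi1}) + card (I \<inter> {lo2..<hi2})"
    proof -
      have "I = (I \<inter> {lo1..<hi1}) \<union> (I \<inter> {lo2..<hi2})" using I(2) by blast
      hence "card I = card ((I \<inter> {lo1..<hi1}) \<union> (I \<inter> {lo2..<hi2}))" by simp
      also have "\<dots> \<le> card (I \<inter> {lo1..<hi1}) + card (I \<inter> {lo2..<hi2})" by (rule card_Un_le)
      finally show ?thesis .
    qed
    moreover have "card (I \<inter> {lo1..<hi1}) \<le> (hi1 - lo1 + 1) div 2"
      using sep_bound[OF sI(1)] by blast
    moreover have "card (I \<inter> {lo2..<hi2}) \<le> (hi2 - lo2 + 1) div 2"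
      using sep_bound[OF sI(2)] by blast
    ultimately show "c \<in> {..?K}" using I(1) by simp
  qed
  thus "finite ?S" using finite_subset by blast
  show "\<And>c. c \<in> ?S \<Longrightarrow> c \<le> ?K" using \<open>?S \<subseteq> {..?K}\<close> by auto
  define k1 where "k1 = (hi1 - lo1 + 1) div 2"
  define k2 where "k2 = (hi2 - lo2 + 1) div 2"
  define W1 where "W1 = (\<lambda>i. lo1 + 2*i) ` {..<k1}"
  define W2 where "W2 = (\<lambda>i. lo2 + 2*i) ` {..<k2}"
  have c1: "card W1 = k1" unfolding W1_def by (subst card_image) (auto simp: inj_on_def)
  have c2: "card W2 = k2" unfolding W2_def by (subst card_image) (auto simp: inj_on_def)
  have W1s: "W1 \<subseteq> {lo1..<hi1}" unfolding W1_def k1_def by auto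
  have W2s: "W2 \<subseteq> {lo2..<hi2}" unfolding W2_def k2_def by auto
  have disj: "W1 \<inter> W2 = {}"
  proof (rule ccontr)
    assume "W1 \<inter> W2 \<noteq> {}"
    then obtain x where "x \<in> W1" "x \<in> W2" by blast
    hence "x < hi1" "lo2 \<le> x" using W1s W2s by auto
    thus False using assms by simp
  qed
  have "separated (W1 \<union> W2)"
    unfolding separated_def
  proof (intro ballI impI)
    fix i j assume h: "i \<in> W1 \<union> W2" "j \<in> W1 \<union> W2" "i \<noteq> j"
    show "i + 2 \<le> j \<or> j + 2 \<le> i"
    proof (cases "i \<in> W1")
      case True
      show ?thesis
      proof (cases "j \<in> W1")
        case True thus ?thesis using \<open>i \<in> W1\<close> h(3) unfolding W1_def by auto
      next
        case False hence "j \<in> W2" using h by auto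
        thus ?thesis using \<open>i \<in> W1\<close> W1s W2s assms by fastforce
      qed
    next
      case False hence iW2: "i \<in> W2" using h by auto
      show ?thesis
      proof (cases "j \<in> W1")
        case True thus ?thesis using iW2 W1s W2s assms by fastforce
      next
        case False hence "j \<in> W2" using h by auto
        thus ?thesis using iW2 h(3) unfolding W2_def by auto
      qed
    qed
  qed
  moreover have "card (W1 \<union> W2) = ?K" using c1 c2 disj k1_def k2_def
    by (simp add: card_Un_disjoint W1_def W2_def)
  moreover have "W1 \<union> W2 \<subseteq> {lo1..<hi1} \<union> {lo2..<hi2}" using W1s W2s by auto
  ultimately show "?K \<in> ?S" by (intro CollectI exI[of _ "W1 \<union> W2"]) simp
qed

lemma fL_00: "fL 0 0 i = i + 1" unfolding fL_def by simp

lemma fL_asc: "1 \<le> a \<Longrightarrow> 1 \<le> b \<Longrightarrow> (fL a b i < fL a b (i+1)) \<longleftrightarrow> i \<noteq> b - 1"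
  unfolding fL_def by (cases "i+1<b"; cases "i+1 = b"; cases "i+1<a+b"; cases "i < a+b"; simp; arith)

lemma fL_des: "1 \<le> a \<Longrightarrow> 1 \<le> b \<Longrightarrow> (fL a b i > fL a b (i+1)) \<longleftrightarrow> i = b - 1"
  unfolding fL_def by (cases "i+1<b"; cases "i+1 = b"; cases "i+1<a+b"; cases "i < a+b"; simp; arith)

lemma asc_set_Lp: "a + b \<le> n \<Longrightarrow> asc_set (Lp a b n) = {i. i+1 < n \<and> fL a b i < fL a b (i+1)}"
  unfolding asc_set_def by (auto simp: Lp_len Lp_nth)

lemma des_set_Lp: "a + b \<le> n \<Longrightarrow> des_set (Lp a b n) = {i. i+1 < n \<and> fL a b i > fL a b (i+1)}"
  unfolding des_set_def by (auto simp: Lp_len Lp_nth)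

lemma asc_id: "asc_set (Lp 0 0 n) = {0..<n-1}"
  by (auto simp: asc_set_Lp fL_00)

lemma des_id: "des_set (Lp 0 0 n) = {}"
  by (auto simp: des_set_Lp fL_00)

lemma asc_pair: "1 \<le> a \<Longrightarrow> 1 \<le> b \<Longrightarrow> a + b \<le> n \<Longrightarrow>
    asc_set (Lp a b n) = {0..<b-1} \<union> {b..<n-1}"
proof -
  assume h: "1 \<le> a" "1 \<le> b" "a + b \<le> n"
  have "asc_set (Lp a b n) = {i. i+1 < n \<and> i \<noteq> b - 1}"
    unfolding asc_set_Lp[OF h(3)] using fL_asc[OF h(1,2)] by simp
  also have "\<dots> = {0..<b-1} \<union> {b..<n-1}" using h by auto
  finally show ?thesis .
qed

lemma des_pair: "1 \<le> a \<Longrightarrow> 1 \<le> b \<Longrightarrow> a + b \<le> n \<Longrightarrow>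
    des_set (Lp a b n) = {b-1}"
proof -
  assume h: "1 \<le> a" "1 \<le> b" "a + b \<le> n"
  have "des_set (Lp a b n) = {i. i+1 < n \<and> i = b - 1}"
    unfolding des_set_Lp[OF h(3)] using fL_des[OF h(1,2)] by simp
  also have "\<dots> = {b-1}" using h by auto
  finally show ?thesis .
qed

lemma weight_id: "p ^ asc (Lp 0 0 n) * q ^ des (Lp 0 0 n) * y ^ MNA (Lp 0 0 n) * z ^ MND (Lp 0 0 n)
   = p ^ (n - 1) * (y::real) ^ (n div 2)"
proof -
  have a: "asc (Lp 0 0 n) = n - 1" unfolding asc_def asc_id by simp
  have d: "des (Lp 0 0 n) = 0" unfolding des_def des_id by simp
  have e: "{0..<n-1} = {0..<n-1} \<union> {n+1..<n+1}" by simp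
  have "MNA (Lp 0 0 n) = (n - 1 - 0 + 1) div 2 + (n + 1 - (n + 1) + 1) div 2"
    unfolding MNA_def asc_id by (subst e, rule msep_two) auto
  hence m: "MNA (Lp 0 0 n) = n div 2" by (cases n) auto
  have e2: "({}::nat set) = {0..<0} \<union> {1..<1}" by simp
  have "MND (Lp 0 0 n) = (0 - 0 + 1) div 2 + (1 - 1 + 1) div 2"
    unfolding MND_def des_id by (subst e2, rule msep_two) auto
  hence md: "MND (Lp 0 0 n) = 0" by simp
  show ?thesis using a d m md by simp
qed

lemma weight_pair: assumes "1 \<le> a" "1 \<le> b" "a + b \<le> n"
  shows "p ^ asc (Lp a b n) * q ^ des (Lp a b n) * y ^ MNA (Lp a b n) * z ^ MND (Lp a b n)
   = p ^ (n - 2) * q * (y::real) ^ (b div 2 + (n - b) div 2) * z"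
proof -
  have "asc (Lp a b n) = card ({0..<b-1} \<union> {b..<n-1})" unfolding asc_def asc_pair[OF assms] ..
  also have "\<dots> = (b - 1) + (n - 1 - b)" by (subst card_Un_disjoint) auto
  finally have a: "asc (Lp a b n) = n - 2" using assms by simp
  have d: "des (Lp a b n) = 1" unfolding des_def des_pair[OF assms] by simp
  have "MNA (Lp a b n) = (b - 1 - 0 + 1) div 2 + (n - 1 - b + 1) div 2"
    unfolding MNA_def asc_pair[OF assms] by (rule msep_two) (use assms in auto)
  hence m: "MNA (Lp a b n) = b div 2 + (n - b) div 2" using assms by simp
  have e: "{b-1} = {b-1..<b} \<union> {b+1..<b+1}" using assms by auto
  have "MND (Lp a b n) = (b - (b - 1) + 1) div 2 + (b + 1 - (b + 1) + 1) div 2"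
    unfolding MND_def des_pair[OF assms] by (subst e, rule msep_two) auto
  hence md: "MND (Lp a b n) = 1" using assms by simp
  show ?thesis using a d m md by simp
qed

definition hh :: "real \<Rightarrow> nat \<Rightarrow> real" where
  "hh y n = (\<Sum>b\<in>{1..<n}. real (n-b) * y^(b div 2 + (n-b) div 2))"

lemma hh_rec: "hh y (n+2) = real (n+1) * y^((n+1) div 2) + y * hh y n + real n * y^(n div 2 + 1)"
proof -
  define g where "g = (\<lambda>c. real (n-c) * y^(c div 2 + (n-c) div 2))"
  define F where "F = (\<lambda>b. real (n+2-b) * y^(b div 2 + (n+2-b) div 2))"
  have h0: "hh y (n+2) = sum F {1..<n+2}" unfolding hh_def F_def ..
  have s1: "{1..<n+2} = insert 1 {2..<n+2}" by auto
  have h1: "sum F {1..<n+2} = F 1 + sum F {2..<n+2}"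
    unfolding s1 by (rule sum.insert) auto
  have F1: "F 1 = real (n+1) * y^((n+1) div 2)" unfolding F_def by simp
  have h2: "sum F {0+2..<n+2} = sum (\<lambda>c. F (c+2)) {0..<n}"
    by (rule sum.shift_bounds_nat_ivl)
  have h3: "sum (\<lambda>c. F (c+2)) {0..<n} = sum (\<lambda>c. y * g c) {0..<n}"
  proof (rule sum.cong)
    fix c assume "c \<in> {0..<n}"
    have e: "n + 2 - (c + 2) = n - c" "(c+2) div 2 = c div 2 + 1" by simp_all
    show "F (c+2) = y * g c" unfolding F_def g_def e by (simp add: algebra_simps)
  qed simp
  have h4: "sum (\<lambda>c. y * g c) {0..<n} = y * (g 0 + hh y n)"
  proof (cases "n = 0")
    case True thus ?thesis by (simp add: hh_def g_def)
  next
    case False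
    have s2: "{0..<n} = insert 0 {1..<n}" using False by auto
    have "sum g {0..<n} = g 0 + sum g {1..<n}" unfolding s2 by (rule sum.insert) auto
    moreover have "sum g {1..<n} = hh y n" unfolding hh_def g_def ..
    ultimately show ?thesis by (simp add: sum_distrib_left[symmetric])
  qed
  have g0: "g 0 = real n * y^(n div 2)" unfolding g_def by simp
  have h5: "sum F {2..<n+2} = y * (g 0 + hh y n)"
  proof -
    have "sum F {2..<n+2} = sum F {0+2..<n+2}" by (simp only: add_0)
    also have "\<dots> = sum (\<lambda>c. F (c+2)) {0..<n}" by (rule h2)
    also have "\<dots> = sum (\<lambda>c. y * g c) {0..<n}" by (rule h3)
    also have "\<dots> = y * (g 0 + hh y n)" by (rule h4)
    finally show ?thesis .
  qed
  show ?thesis unfolding h0 h1 F1 h5 g0 by (simp add: algebra_simps)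
qed

lemma hh_closed: "hh y (2*m+1) = real m * (2*m+1) * y^m \<and>
   hh y (2*m+2) = real m * (m+1) * y^(m+1) + (real m+1)^2 * y^m"
proof (induction m)
  case 0
  have "hh y 2 = 1" by (simp add: hh_def numeral_2_eq_2)
  thus ?case by (simp add: hh_def)
next
  case (Suc m)
  have a: "hh y (2*Suc m+1) = hh y ((2*m+1)+2)" by simp
  have b: "hh y (2*Suc m+2) = hh y ((2*m+2)+2)" by simp
  have d1: "(2*m+1+1) div 2 = m+1" "(2*m+1) div 2 = m" by simp_all
  have d2: "(2*m+2+1) div 2 = m+1" "(2*m+2) div 2 = m+1" by simp_all
  show ?case unfolding a b hh_rec d1 d2 using Suc.IH
    by (simp add: algebra_simps power2_eq_square)
qed

definition cf :: "real \<Rightarrow> real \<Rightarrow> real \<Rightarrow> real \<Rightarrow> nat \<Rightarrow> real" where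
  "cf p q y z n = p^(n-1) * y^(n div 2) + p^(n-2) * q * z * hh y n"

lemma cf_0: "cf p q y z 0 = 1" by (simp add: cf_def hh_def)

lemma cf_odd: "cf p q y z (2*j+1) = p^(2*j) * y^j + p^(2*j-1) * q * z * (real j * (2*j+1) * y^j)"
  using hh_closed[of y j] by (simp add: cf_def)

lemma cf_even: "cf p q y z (2*j+2) = p^(2*j+1) * y^(j+1)
   + p^(2*j) * q * z * (real j * (j+1) * y^(j+1) + (real j+1)^2 * y^j)"
proof -
  have "(2*j+2) div 2 = j + 1" by simp
  thus ?thesis using hh_closed[of y j] by (simp add: cf_def)
qed

lemma cube_exp: "(1 - C * Y) ^ 3 = 1 - 3 * C * Y + 3 * C^2 * Y^2 - C^3 * (Y^3::'a::comm_ring_1)"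
  by (simp add: power3_eq_cube power2_eq_square algebra_simps)

lemma fps_main:
  fixes p q y z :: real
  defines "X \<equiv> (fps_X :: real fps)"
  defines "A \<equiv> 1 + X + fps_const (p*y) * X^2 - fps_const (3*p^2*y) * X^2
      - fps_const (2*p^2*y) * X^3 - fps_const (2*p^3*y^2) * X^4
      + fps_const (3*p^4*y^2) * X^4 + fps_const (p^4*y^2) * X^5
      + fps_const (p^5*y^3) * X^6 - fps_const (p^6*y^3) * X^6
      + fps_const (q*z) * X^2 + fps_const (3*p*q*y*z) * X^3
      + fps_const (p^2*q*y*z) * X^4 + fps_const (2*p^2*q*y^2*z) * X^4
      + fps_const (p^3*q*y^2*z) * X^5"
  shows "Abs_fps (cf p q y z) = A / (1 - fps_const (p^2*y) * X^2) ^ 3"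
proof -
  define c where "c = p^2*y"
  define G where "G = Abs_fps (cf p q y z)"
  define D where "D = (1 - fps_const c * X^2) ^ 3"
  have Dexp: "D = 1 - fps_const (3*c) * X^2 + fps_const (3*c^2) * X^4 - fps_const (c^3) * X^6"
  proof -
    have "fps_const (3*c) = 3 * fps_const c" "fps_const (3*c^2) = 3 * fps_const c ^ 2"
         "fps_const (c^3) = fps_const c ^ 3"
      by (simp_all add: fps_numeral_fps_const)
    moreover have "(X^2)^2 = X^4" "(X^2)^3 = X^6" by (simp_all flip: power_mult)
    ultimately show ?thesis unfolding D_def cube_exp by simp
  qed
  have GD: "G * D = 1 * G - fps_const (3*c) * (G * X^2) + fps_const (3*c^2) * (G * X^4)
      - fps_const (c^3) * (G * X^6)"
    unfolding Dexp by (simp add: algebra_simps)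
  have nthGD: "fps_nth (G * D) n = cf p q y z n - 3*c * (if n < 2 then 0 else cf p q y z (n-2))
     + 3*c^2 * (if n < 4 then 0 else cf p q y z (n-4)) - c^3 * (if n < 6 then 0 else cf p q y z (n-6))" for n
    unfolding GD X_def by (simp add: fps_X_power_mult_right_nth G_def)
  have nthA: "fps_nth A n = (if n = 0 then 1 else 0) + (if n = 1 then 1 else 0)
      + (if n = 2 then p*y - 3*p^2*y + q*z else 0)
      + (if n = 3 then - 2*p^2*y + 3*p*q*y*z else 0)
      + (if n = 4 then - 2*p^3*y^2 + 3*p^4*y^2 + p^2*q*y*z + 2*p^2*q*y^2*z else 0)
      + (if n = 5 then p^4*y^2 + p^3*q*y^2*z else 0)
      + (if n = 6 then p^5*y^3 - p^6*y^3 else 0)" for n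
    unfolding A_def X_def by (auto simp: fps_X_power_nth)
  have co: "cf p q y z (2*j+1) = p^(2*j) * y^j + p^(2*j-1) * q * z * (real j * (2*j+1) * y^j)" for j
    by (rule cf_odd)
  have ce: "cf p q y z (2*j+2) = p^(2*j+1) * y^(j+1)
     + p^(2*j) * q * z * (real j * (j+1) * y^(j+1) + (real j+1)^2 * y^j)" for j
    by (rule cf_even)
  have v0: "cf p q y z 0 = 1" by (rule cf_0)
  have v1: "cf p q y z 1 = 1" using co[of 0] by (simp add: eval_nat_numeral)
  have v2: "cf p q y z 2 = p*y + q*z" using ce[of 0] by (simp add: eval_nat_numeral)
  have v3: "cf p q y z 3 = p^2*y + 3*p*q*z*y" using co[of 1] by (simp add: numeral_eq_Suc)
  have v4: "cf p q y z 4 = p^3*y^2 + p^2*q*z*(2*y^2 + 4*y)" using ce[of 1] by (simp add: numeral_eq_Suc)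
  have v5: "cf p q y z 5 = p^4*y^2 + p^3*q*z*(10*y^2)" using co[of 2] by (simp add: numeral_eq_Suc)
  have v6: "cf p q y z 6 = p^5*y^3 + p^4*q*z*(6*y^3 + 9*y^2)" using ce[of 2] by (simp add: numeral_eq_Suc)
  have v7: "cf p q y z 7 = p^6*y^3 + p^5*q*z*(21*y^3)" using co[of 3] by (simp add: numeral_eq_Suc)
  have "fps_nth (G * D) n = fps_nth A n" for n
  proof -
    consider "n \<le> 7" | k where "n = 2*k+8" | k where "n = 2*k+9"
    proof (cases "n \<le> 7")
      case False
      hence "n \<ge> 8" by simp
      then obtain t where t: "n = t + 8" by (metis add.commute le_Suc_ex)
      show thesis
      proof (cases "even t")
        case True then obtain k where "t = 2*k" by blast
        thus thesis using t that(2) by simp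
      next
        case False then obtain k where "t = 2*k+1" using oddE by blast
        thus thesis using t that(3) by simp
      qed
    qed simp
    thus ?thesis
    proof cases
      case 1
      hence "n = 0 \<or> n = 1 \<or> n = 2 \<or> n = 3 \<or> n = 4 \<or> n = 5 \<or> n = 6 \<or> n = 7" by auto
      thus ?thesis
        unfolding nthGD nthA c_def
        by (elim disjE; simp add: v0 v1 v1[simplified] v2 v3 v4 v5 v6 v7; simp add: eval_nat_numeral algebra_simps)
    next
      case 2
      have e: "cf p q y z n = cf p q y z (2*(k+3)+2)" "cf p q y z (n-2) = cf p q y z (2*(k+2)+2)"
        "cf p q y z (n-4) = cf p q y z (2*(k+1)+2)" "cf p q y z (n-6) = cf p q y z (2*k+2)"
        using 2 by (intro arg_cong[where f="cf p q y z"]; simp)+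
      have "fps_nth A n = 0" using 2 unfolding nthA by simp
      moreover have "fps_nth (G*D) n = cf p q y z n - 3*c * cf p q y z (n-2)
        + 3*c^2 * cf p q y z (n-4) - c^3 * cf p q y z (n-6)" using 2 unfolding nthGD by simp
      moreover have "cf p q y z n - 3*c * cf p q y z (n-2)
        + 3*c^2 * cf p q y z (n-4) - c^3 * cf p q y z (n-6) = 0"
        unfolding e ce c_def by (simp add: power_add power_mult_distrib; algebra)
      ultimately show ?thesis by simp
    next
      case 3
      have e: "cf p q y z n = cf p q y z (2*(k+4)+1)" "cf p q y z (n-2) = cf p q y z (2*(k+3)+1)"
        "cf p q y z (n-4) = cf p q y z (2*(k+2)+1)" "cf p q y z (n-6) = cf p q y z (2*(k+1)+1)"
        using 3 by (intro arg_cong[where f="cf p q y z"]; simp)+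
      have "fps_nth A n = 0" using 3 unfolding nthA by simp
      moreover have "fps_nth (G*D) n = cf p q y z n - 3*c * cf p q y z (n-2)
        + 3*c^2 * cf p q y z (n-4) - c^3 * cf p q y z (n-6)" using 3 unfolding nthGD by simp
      moreover have "cf p q y z n - 3*c * cf p q y z (n-2)
        + 3*c^2 * cf p q y z (n-4) - c^3 * cf p q y z (n-6) = 0"
        unfolding e co c_def by (simp add: power_add power_mult_distrib; algebra)
      ultimately show ?thesis by simp
    qed
  qed
  hence GDA: "G * D = A" by (simp add: fps_eq_iff)
  have D0: "fps_nth D 0 \<noteq> 0" unfolding D_def X_def by simp
  have "A / D = G * D * inverse D" unfolding GDA by (rule fps_divide_unit[OF D0])
  also have "\<dots> = G" using inverse_mult_eq_1'[OF D0] by (simp add: mult.assoc)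
  finally show ?thesis unfolding G_def D_def c_def by simp
qed

lemma avoiders_eq:
  "perms_avoiding2 n [1,3,2] [3,2,1] =
     insert (Lp 0 0 n) ((\<lambda>(b,a). Lp a b n) ` (SIGMA b:{1..<n}. {1..n-b}))"
proof
  show "perms_avoiding2 n [1,3,2] [3,2,1] \<subseteq> insert (Lp 0 0 n) ((\<lambda>(b,a). Lp a b n) ` (SIGMA b:{1..<n}. {1..n-b}))"
  proof
    fix \<pi> assume "\<pi> \<in> perms_avoiding2 n [1,3,2] [3,2,1]"
    hence "\<pi> \<in> perms n" "avoids \<pi> [1,3,2]" "avoids \<pi> [3,2,1]" unfolding perms_avoiding2_def by auto
    from avoider_form[OF this]
    show "\<pi> \<in> insert (Lp 0 0 n) ((\<lambda>(b,a). Lp a b n) ` (SIGMA b:{1..<n}. {1..n-b}))"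
    proof
      assume "\<pi> = Lp 0 0 n" thus ?thesis by simp
    next
      assume "\<exists>a b. 1 \<le> a \<and> 1 \<le> b \<and> a + b \<le> n \<and> \<pi> = Lp a b n"
      then obtain a b where ab: "1 \<le> a" "1 \<le> b" "a + b \<le> n" "\<pi> = Lp a b n" by blast
      hence "(b,a) \<in> (SIGMA b:{1..<n}. {1..n-b})" by auto
      hence "\<pi> \<in> (\<lambda>(b,a). Lp a b n) ` (SIGMA b:{1..<n}. {1..n-b})"
        using ab(4) by (metis (no_types, lifting) case_prod_conv image_eqI)
      thus ?thesis by blast
    qed
  qed
next
  show "insert (Lp 0 0 n) ((\<lambda>(b,a). Lp a b n) ` (SIGMA b:{1..<n}. {1..n-b})) \<subseteq> perms_avoiding2 n [1,3,2] [3,2,1]"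
  proof
    fix \<pi> assume h: "\<pi> \<in> insert (Lp 0 0 n) ((\<lambda>(b,a). Lp a b n) ` (SIGMA b:{1..<n}. {1..n-b}))"
    then obtain a b where ab: "a + b \<le> n" "\<pi> = Lp a b n"
    proof
      assume "\<pi> = Lp 0 0 n" thus thesis using that[of 0 0] by simp
    next
      assume "\<pi> \<in> (\<lambda>(b,a). Lp a b n) ` (SIGMA b:{1..<n}. {1..n-b})"
      then obtain b a where "b \<in> {1..<n}" "a \<in> {1..n-b}" "\<pi> = Lp a b n" by auto
      thus thesis using that[of a b] by auto
    qed
    thus "\<pi> \<in> perms_avoiding2 n [1,3,2] [3,2,1]"
      unfolding perms_avoiding2_def using Lp_perm Lp_avoids by auto
  qed
qed

lemma coeff_eq:
  "(\<Sum>\<pi>\<in>perms_avoiding2 n [1,3,2] [3,2,1].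
      p ^ asc \<pi> * q ^ des \<pi> * y ^ MNA \<pi> * z ^ MND \<pi>) = cf p q y z n"
proof -
  define S where "S = (SIGMA b:{1..<n}. {1..n-b})"
  define \<phi> where "\<phi> = (\<lambda>(b,a). Lp a b n)"
  define w where "w = (\<lambda>\<pi>. p ^ asc \<pi> * q ^ des \<pi> * y ^ MNA \<pi> * z ^ MND \<pi>)"
  have fin: "finite S" unfolding S_def by auto
  have Smem: "1 \<le> a \<and> 1 \<le> b \<and> a + b \<le> n" if "(b,a) \<in> S" for a b
    using that unfolding S_def by auto
  have notin: "Lp 0 0 n \<notin> \<phi> ` S"
  proof
    assume "Lp 0 0 n \<in> \<phi> ` S"
    then obtain b a where ba: "(b,a) \<in> S" "Lp 0 0 n = Lp a b n" unfolding \<phi>_def by auto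
    have "des_set (Lp 0 0 n) = {}" by (rule des_id)
    moreover have "des_set (Lp a b n) = {b-1}" using Smem[OF ba(1)] des_pair by blast
    ultimately show False using ba(2) by simp
  qed
  have inj: "inj_on \<phi> S"
  proof (rule inj_onI)
    fix x x' assume x: "x \<in> S" "x' \<in> S" "\<phi> x = \<phi> x'"
    obtain b a where xba: "x = (b,a)" by (cases x)
    obtain b' a' where xba': "x' = (b',a')" by (cases x')
    have h1: "1 \<le> a \<and> 1 \<le> b \<and> a + b \<le> n" using Smem x(1) xba by blast
    have h2: "1 \<le> a' \<and> 1 \<le> b' \<and> a' + b' \<le> n" using Smem x(2) xba' by blast
    have eq: "Lp a b n = Lp a' b' n" using x(3) xba xba' unfolding \<phi>_def by simp
    have "{b-1} = {b'-1}" using des_pair[of a b n] des_pair[of a' b' n] h1 h2 eq by simp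
    hence bb: "b = b'" using h1 h2 by auto
    have "Lp a b n ! 0 = a + 1" using Lp_nth[of a b n 0] h1 by (simp add: fL_def)
    moreover have "Lp a' b' n ! 0 = a' + 1" using Lp_nth[of a' b' n 0] h2 by (simp add: fL_def)
    ultimately have "a = a'" using eq by simp
    thus "x = x'" using bb xba xba' by simp
  qed
  have "(\<Sum>\<pi>\<in>perms_avoiding2 n [1,3,2] [3,2,1]. w \<pi>) = w (Lp 0 0 n) + sum w (\<phi> ` S)"
    unfolding avoiders_eq S_def[symmetric] \<phi>_def[symmetric]
    using fin notin by (simp add: sum.insert)
  also have "sum w (\<phi> ` S) = sum (w \<circ> \<phi>) S" using sum.reindex[OF inj] .
  also have "\<dots> = (\<Sum>(b,a)\<in>S. p ^ (n - 2) * q * y ^ (b div 2 + (n - b) div 2) * z)"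
  proof (rule sum.cong)
    fix x assume "x \<in> S"
    then obtain b a where xba: "x = (b,a)" "(b,a) \<in> S" by (cases x) auto
    show "(w \<circ> \<phi>) x = (case x of (b,a) \<Rightarrow> p ^ (n - 2) * q * y ^ (b div 2 + (n - b) div 2) * z)"
      using weight_pair[of a b n p q y z] Smem[OF xba(2)] xba(1) unfolding w_def \<phi>_def by simp
  qed simp
  also have "\<dots> = (\<Sum>b\<in>{1..<n}. \<Sum>a\<in>{1..n-b}. p ^ (n - 2) * q * y ^ (b div 2 + (n - b) div 2) * z)"
    unfolding S_def by (rule sum.Sigma[symmetric]) auto
  also have "\<dots> = (\<Sum>b\<in>{1..<n}. p ^ (n - 2) * q * z * (real (n - b) * y ^ (b div 2 + (n - b) div 2)))"
    by (rule sum.cong) (simp_all add: algebra_simps)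
  also have "\<dots> = p ^ (n - 2) * q * z * hh y n"
    unfolding hh_def by (simp add: sum_distrib_left)
  finally have "(\<Sum>\<pi>\<in>perms_avoiding2 n [1,3,2] [3,2,1]. w \<pi>) =
      p ^ (n - 1) * y ^ (n div 2) + p ^ (n - 2) * q * z * hh y n"
    using weight_id[of p n q y z] unfolding w_def by simp
  thus ?thesis unfolding w_def cf_def .
qed

theorem theorem4:
  fixes p q y z :: real
  defines "X \<equiv> (fps_X :: real fps)"
  defines "A \<equiv> 1 + X + fps_const (p*y) * X^2 - fps_const (3*p^2*y) * X^2
      - fps_const (2*p^2*y) * X^3 - fps_const (2*p^3*y^2) * X^4
      + fps_const (3*p^4*y^2) * X^4 + fps_const (p^4*y^2) * X^5
      + fps_const (p^5*y^3) * X^6 - fps_const (p^6*y^3) * X^6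
      + fps_const (q*z) * X^2 + fps_const (3*p*q*y*z) * X^3
      + fps_const (p^2*q*y*z) * X^4 + fps_const (2*p^2*q*y^2*z) * X^4
      + fps_const (p^3*q*y^2*z) * X^5"
  shows "G [1,3,2] [3,2,1] p q y z = A / (1 - fps_const (p^2*y) * X^2) ^ 3"
  proof -
  have "G [1,3,2] [3,2,1] p q y z = Abs_fps (cf p q y z)"
    unfolding G_def using coeff_eq by simp
  thus ?thesis unfolding X_def A_def by (simp only: fps_main)
qed

end
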